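(* With $\mathbf B$ as below, for $A>0$ and $\varepsilon>0$ define $\psi^A_\varepsilon=\exp(-A\mathbf 1_{\mathbf B^c}/\varepsilon^2)$ on $[0,T]\times\overline{\mathcal O}$, $u^A_\varepsilon(t,x)=\inf_{\theta\in\mathcal T_t}E[\psi^A_\varepsilon(\theta,X^{t,x,\varepsilon}_\theta)]$, $v^A_\varepsilon=-\varepsilon^2\ln u^A_\varepsilon$, $u_\varepsilon(t,x)=P[\sup_{s\in[t,T]}|X^{t,x,\varepsilon}_s-g_0(s)|<r]$ and $v_\varepsilon=-\varepsilon^2\ln u_\varepsilon$ (with $-\ln0=+\infty$). Then for all $A>0$ and all $(t,x)\in[0,T]\times\overline{\mathcal O}$, $$\limsup_{\varepsilon\to0}v^A_\varepsilon(t,x)=A\wedge\limsup_{\varepsilon\to0}v_\varepsilon(t,x).$$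
   Context: Setting: $\mathcal O\subset\mathbb R^d$ bounded open of class $W^{2,\infty}$; $\gamma$ Lipschitz with $\gamma\cdot n\ge c_0>0$ on $\partial\mathcal O$; $b_\varepsilon,\sigma_\varepsilon$ continuous, Lipschitz in space uniformly in time. $X^{t,x,\varepsilon}$ is the strong solution on $[t,T]$ of the reflected SDE $dX_s=b_\varepsilon(s,X_s)ds+\varepsilon\sigma_\varepsilon(s,X_s)dW_s-dk_s$, $X_s\in\overline{\mathcal O}$, $k_s=\int_t^s1_{\partial\mathcal O}(X_u)\gamma(X_u)d|k|_u$, $X_t=x$. $\mathcal T_t$: stopping times with values in $[t,T]$. Fix $g_0\in C([0,T];\overline{\mathcal O})$, $r>0$ and $\mathbf B=\{(s,y)\in[0,T]\times\overline{\mathcal O}:|y-g_0(s)|<r\}$, $\mathbf B^c$ its complement in $[0,T]\times\overline{\mathcal O}$. *)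

theory Defs
  imports "HOL-Probability.Probability"
begin

text \<open>Bounded open domain of class W^{2,infinity}: near each boundary point it is the strict
  sublevel set of a function with nonvanishing, Lipschitz gradient (W^{2,infinity} on a ball
  is the same as C^1 with Lipschitz gradient).\<close>
definition W2inf_domain :: "(real^'n) set \<Rightarrow> bool" where
  "W2inf_domain Om \<longleftrightarrow> open Om \<and> bounded Om \<and>
     (\<forall>z\<in>frontier Om. \<exists>\<delta>>0. \<exists>\<rho> D L.
        (\<forall>y\<in>ball z \<delta>. (\<rho> has_derivative (\<lambda>h. D y \<bullet> h)) (at y)) \<and>
        L-lipschitz_on (ball z \<delta>) D \<and> (\<forall>y\<in>ball z \<delta>. D y \<noteq> 0) \<and>
        Om \<inter> ball z \<delta> = {y\<in>ball z \<delta>. \<rho> y < 0})"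

definition unit_outward_normal :: "(real^'n) set \<Rightarrow> real^'n \<Rightarrow> real^'n \<Rightarrow> bool" where
  "unit_outward_normal Om y \<nu> \<longleftrightarrow> y \<in> frontier Om \<and>
     (\<exists>\<delta>>0. \<exists>\<rho> D.
        (\<forall>w\<in>ball y \<delta>. (\<rho> has_derivative (\<lambda>h. D w \<bullet> h)) (at w)) \<and>
        continuous_on (ball y \<delta>) D \<and> D y \<noteq> 0 \<and>
        Om \<inter> ball y \<delta> = {w\<in>ball y \<delta>. \<rho> w < 0} \<and> \<nu> = D y /\<^sub>R norm (D y))"

definition variation_sums :: "(real \<Rightarrow> 'v::real_normed_vector) \<Rightarrow> real \<Rightarrow> real \<Rightarrow> real set" where
  "variation_sums f a c =
     {(\<Sum>i<n. norm (f (p (Suc i)) - f (p i))) | p n. p 0 = a \<and> p n = c \<and> (\<forall>i<n. p i \<le> p (Suc i))}"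

definition variation_on :: "(real \<Rightarrow> 'v::real_normed_vector) \<Rightarrow> real \<Rightarrow> real \<Rightarrow> real" where
  "variation_on f a c = Sup (variation_sums f a c)"

definition bounded_variation :: "(real \<Rightarrow> 'v::real_normed_vector) \<Rightarrow> real \<Rightarrow> real \<Rightarrow> bool" where
  "bounded_variation f a c \<longleftrightarrow> bdd_above (variation_sums f a c)"

definition brownian_motion ::
  "'a measure \<Rightarrow> (real \<Rightarrow> 'a measure) \<Rightarrow> ('a \<Rightarrow> real \<Rightarrow> real^'m) \<Rightarrow> bool" where
  "brownian_motion M F W \<longleftrightarrow>
     (\<forall>\<omega>\<in>space M. W \<omega> 0 = 0 \<and> continuous_on {0..} (W \<omega>)) \<and>
     (\<forall>s\<ge>0. (\<lambda>\<omega>. W \<omega> s) \<in> borel_measurable (F s)) \<and>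
     (\<forall>s u. 0 \<le> s \<and> s < u \<longrightarrow>
        prob_space.indep_vars M (\<lambda>_. borel) (\<lambda>i \<omega>. (W \<omega> u - W \<omega> s) $ i) UNIV \<and>
        (\<forall>i. distributed M lborel (\<lambda>\<omega>. (W \<omega> u - W \<omega> s) $ i) (normal_density 0 (sqrt (u - s)))) \<and>
        (\<forall>A\<in>sets (F s). \<forall>C\<in>sets borel.
           measure M (A \<inter> {\<omega>\<in>space M. W \<omega> u - W \<omega> s \<in> C}) =
           measure M A * measure M {\<omega>\<in>space M. W \<omega> u - W \<omega> s \<in> C}))"

text \<open>I is the Ito integral of the continuous adapted integrand H against W on [t,T]:
  for each s in [t,T], I s is the limit in probability of the left-point Riemann sums over
  uniform partitions of [t,s].\<close>
definition ito_integral ::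
  "'a measure \<Rightarrow> ('a \<Rightarrow> real \<Rightarrow> real^'m) \<Rightarrow> (real \<Rightarrow> 'a \<Rightarrow> real^'m^'n) \<Rightarrow> real \<Rightarrow> real
     \<Rightarrow> ('a \<Rightarrow> real \<Rightarrow> real^'n) \<Rightarrow> bool" where
  "ito_integral M W H t T I \<longleftrightarrow>
     (\<forall>s\<in>{t..T}. \<forall>\<delta>>0.
        (\<lambda>n. measure M {\<omega>\<in>space M.
            norm ((\<Sum>j<n. H (t + real j * (s - t) / real n) \<omega> *v
                   (W \<omega> (t + real (Suc j) * (s - t) / real n) - W \<omega> (t + real j * (s - t) / real n)))
                  - I \<omega> s) > \<delta>}) \<longlonglongrightarrow> 0)"

text \<open>X is a strong solution on [t,T] of
  dX = b(s,X) ds + eps sigma(s,X) dW - dk, X in closure Om, k = int 1_{boundary Om}(X) gamma(X) d|k|, X_t = x.\<close>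
definition reflected_sde_solution ::
  "'a measure \<Rightarrow> (real \<Rightarrow> 'a measure) \<Rightarrow> ('a \<Rightarrow> real \<Rightarrow> real^'m) \<Rightarrow> (real^'n) set
   \<Rightarrow> (real^'n \<Rightarrow> real^'n) \<Rightarrow> (real \<Rightarrow> real^'n \<Rightarrow> real^'n) \<Rightarrow> (real \<Rightarrow> real^'n \<Rightarrow> real^'m^'n)
   \<Rightarrow> real \<Rightarrow> real \<Rightarrow> real \<Rightarrow> real^'n \<Rightarrow> ('a \<Rightarrow> real \<Rightarrow> real^'n) \<Rightarrow> bool" where
  "reflected_sde_solution M F W Om \<gamma> b \<sigma> \<epsilon> t T x X \<longleftrightarrow>
     (\<forall>s\<in>{t..T}. (\<lambda>\<omega>. X \<omega> s) \<in> borel_measurable (F s)) \<and>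
     (\<forall>\<omega>\<in>space M. continuous_on {t..T} (X \<omega>) \<and> X \<omega> t = x \<and> (\<forall>s\<in>{t..T}. X \<omega> s \<in> closure Om)) \<and>
     (\<exists>k I.
        (\<forall>s\<in>{t..T}. (\<lambda>\<omega>. k \<omega> s) \<in> borel_measurable (F s)) \<and>
        (\<forall>\<omega>\<in>space M. continuous_on {t..T} (k \<omega>) \<and> k \<omega> t = 0 \<and> bounded_variation (k \<omega>) t T) \<and>
        (AE \<omega> in M. \<forall>s\<in>{t..T}.
           k \<omega> s = integral\<^sup>L (interval_measure (\<lambda>u. variation_on (k \<omega>) t (min T (max t u))))
                      (\<lambda>u. indicator {t<..s} u *\<^sub>R (indicator (frontier Om) (X \<omega> u) *\<^sub>R \<gamma> (X \<omega> u)))) \<and>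
        ito_integral M W (\<lambda>u \<omega>. \<sigma> u (X \<omega> u)) t T I \<and>
        (AE \<omega> in M. \<forall>s\<in>{t..T}.
           X \<omega> s = x + integral {t..s} (\<lambda>u. b u (X \<omega> u)) + \<epsilon> *\<^sub>R I \<omega> s - k \<omega> s))"

definition tube :: "real \<Rightarrow> (real^'n) set \<Rightarrow> (real \<Rightarrow> real^'n) \<Rightarrow> real \<Rightarrow> (real \<times> (real^'n)) set" where
  "tube T Om g0 r = {(s, y). s \<in> {0..T} \<and> y \<in> closure Om \<and> norm (y - g0 s) < r}"

definition tube_compl :: "real \<Rightarrow> (real^'n) set \<Rightarrow> (real \<Rightarrow> real^'n) \<Rightarrow> real \<Rightarrow> (real \<times> (real^'n)) set" where
  "tube_compl T Om g0 r = ({0..T} \<times> closure Om) - tube T Om g0 r"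

definition psiA :: "real \<Rightarrow> (real^'n) set \<Rightarrow> (real \<Rightarrow> real^'n) \<Rightarrow> real \<Rightarrow> real \<Rightarrow> real \<Rightarrow> real \<times> (real^'n) \<Rightarrow> real" where
  "psiA T Om g0 r A \<epsilon> p = exp (- A * indicator (tube_compl T Om g0 r) p / \<epsilon>\<^sup>2)"

definition stopping_times_in :: "'a measure \<Rightarrow> (real \<Rightarrow> 'a measure) \<Rightarrow> real \<Rightarrow> real \<Rightarrow> ('a \<Rightarrow> real) set" where
  "stopping_times_in M F t T = {\<theta>. stopping_time F \<theta> \<and> (\<forall>\<omega>\<in>space M. t \<le> \<theta> \<omega> \<and> \<theta> \<omega> \<le> T)}"

definition neg_log_scaled :: "real \<Rightarrow> real \<Rightarrow> ereal" where
  "neg_log_scaled \<epsilon> u = (if u = 0 then \<infinity> else ereal (- \<epsilon>\<^sup>2 * ln u))"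

end

theory Submission
  imports Defs
begin


lemma meas_sub:
  assumes "f \<in> measurable N B" "sets N \<subseteq> sets M" "space N = space M"
  shows "f \<in> measurable M B"
  using assms unfolding measurable_def by auto

lemma meas_stop_eval:
  fixes Y :: "'a \<Rightarrow> real \<Rightarrow> 'b::metric_space" and \<theta> :: "'a \<Rightarrow> real"
  assumes Ymeas: "\<And>s. s \<in> {t..T} \<Longrightarrow> (\<lambda>\<omega>. Y \<omega> s) \<in> borel_measurable M"
    and Ycont: "\<And>\<omega>. \<omega> \<in> space M \<Longrightarrow> continuous_on {t..T} (Y \<omega>)"
    and th: "\<theta> \<in> borel_measurable M" and thr: "\<And>\<omega>. \<omega> \<in> space M \<Longrightarrow> \<theta> \<omega> \<in> {t..T}"
  shows "(\<lambda>\<omega>. Y \<omega> (\<theta> \<omega>)) \<in> borel_measurable M"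
proof (cases "t < T")
  case False
  show ?thesis
  proof (cases "space M = {}")
    case True
    then show ?thesis unfolding measurable_def by auto
  next
    case ne: False
    then obtain \<omega>0 where "\<omega>0 \<in> space M" by blast
    from thr[OF this] False have tT: "t = T" by auto
    have mm: "(\<lambda>\<omega>. Y \<omega> t) \<in> borel_measurable M" using Ymeas tT by simp
    have eq: "\<And>\<omega>. \<omega> \<in> space M \<Longrightarrow> Y \<omega> t = Y \<omega> (\<theta> \<omega>)" using thr tT by force
    show ?thesis using measurable_cong[where f="\<lambda>\<omega>. Y \<omega> t" and g="\<lambda>\<omega>. Y \<omega> (\<theta> \<omega>)", OF eq] mm by simp
  qed
next
  case True
  define h where "h = T - t"
  have h: "h > 0" using True h_def by simp
  define k where "k n \<omega> = nat \<lceil>(\<theta> \<omega> - t) * real (Suc n) / h\<rceil>" for n \<omega>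
  define g where "g n i = min T (t + h * real i / real (Suc n))" for n i
  have gr: "g n i \<in> {t..T}" for n i unfolding g_def h_def using True by auto
  have km: "k n \<in> measurable M (count_space UNIV)" for n
    unfolding k_def using th by measurable
  have m: "(\<lambda>\<omega>. Y \<omega> (g n (k n \<omega>))) \<in> borel_measurable M" for n
    by (rule measurable_compose_countable[where f="\<lambda>i \<omega>. Y \<omega> (g n i)", OF _ km])
       (rule Ymeas[OF gr])
  have bnd: "\<theta> \<omega> \<le> g n (k n \<omega>) \<and> g n (k n \<omega>) \<le> \<theta> \<omega> + h / real (Suc n)" if w: "\<omega> \<in> space M" for n \<omega>
  proof -
    define c where "c = (\<theta> \<omega> - t) * real (Suc n) / h"
    have c0: "c \<ge> 0" unfolding c_def using thr[OF w] h by auto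
    have kc: "real (k n \<omega>) = real_of_int \<lceil>c\<rceil>" unfolding k_def c_def[symmetric] using c0 by simp
    have c1: "c \<le> real (k n \<omega>)" "real (k n \<omega>) \<le> c + 1" using kc
      by (simp_all add: le_of_int_ceiling)
    have "t + h * real (k n \<omega>) / real (Suc n) \<ge> t + h * c / real (Suc n)"
      using c1 h by (simp add: divide_right_mono)
    also have "t + h * c / real (Suc n) = \<theta> \<omega>"
    proof -
      have "h * c / real (Suc n) = \<theta> \<omega> - t" unfolding c_def using h
        by (metis less_irrefl nonzero_mult_div_cancel_left of_nat_0_eq_iff nat.distinct(1) times_divide_eq_right divide_divide_eq_right nonzero_mult_divide_mult_cancel_right2 mult.commute)
      then show ?thesis by simp
    qed
    finally have l1: "\<theta> \<omega> \<le> t + h * real (k n \<omega>) / real (Suc n)" .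
    have "t + h * real (k n \<omega>) / real (Suc n) \<le> t + h * (c + 1) / real (Suc n)"
      using c1 h by (simp add: divide_right_mono)
    also have "\<dots> = \<theta> \<omega> + h / real (Suc n)"
    proof -
      have s: "real (Suc n) > 0" by simp
      show ?thesis unfolding c_def using s h by (simp add: field_simps del: of_nat_Suc)
    qed
    finally have l2: "t + h * real (k n \<omega>) / real (Suc n) \<le> \<theta> \<omega> + h / real (Suc n)" .
    show ?thesis using l1 l2 thr[OF w] unfolding g_def by auto
  qed
  have conv: "(\<lambda>n. Y \<omega> (g n (k n \<omega>))) \<longlonglongrightarrow> Y \<omega> (\<theta> \<omega>)" if w: "\<omega> \<in> space M" for \<omega>
  proof -
    have "(\<lambda>n. h / real (Suc n)) \<longlonglongrightarrow> 0"
      using LIMSEQ_Suc[OF lim_const_over_n[of h]] by simp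
    then have up: "(\<lambda>n. \<theta> \<omega> + h / real (Suc n)) \<longlonglongrightarrow> \<theta> \<omega>"
      using tendsto_add[OF tendsto_const] by fastforce
    have "(\<lambda>n. g n (k n \<omega>)) \<longlonglongrightarrow> \<theta> \<omega>"
      by (rule tendsto_sandwich[OF _ _ tendsto_const up]) (use bnd[OF w] in auto)
    then show ?thesis
      by (rule continuous_on_tendsto_compose[OF Ycont[OF w]]) (use thr[OF w] gr in auto)
  qed
  show ?thesis by (rule borel_measurable_LIMSEQ_metric[OF m conv])
qed



lemma exists_hit_meas:
  fixes \<phi> :: "'a \<Rightarrow> real \<Rightarrow> real"
  assumes meas: "\<And>q. q \<in> {t..s} \<Longrightarrow> (\<lambda>\<omega>. \<phi> \<omega> q) \<in> borel_measurable N"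
    and cont: "\<And>\<omega>. \<omega> \<in> space N \<Longrightarrow> continuous_on {t..s} (\<phi> \<omega>)"
    and ts: "t \<le> s"
  shows "{\<omega>\<in>space N. \<exists>u\<in>{t..s}. r \<le> \<phi> \<omega> u} \<in> sets N"
proof -
  define D where "D = {q\<in>\<rat>. t < q \<and> q < s} \<union> {t, s}"
  have Dc: "countable D" unfolding D_def
    by (auto intro!: countable_subset[OF _ countable_rat])
  have Ds: "D \<subseteq> {t..s}" unfolding D_def using ts by auto
  have eq: "{\<omega>\<in>space N. \<exists>u\<in>{t..s}. r \<le> \<phi> \<omega> u} =
            {\<omega>\<in>space N. \<forall>n::nat. \<exists>q\<in>D. r - 1 / real (Suc n) < \<phi> \<omega> q}"
  proof (intro set_eqI iffI)
    fix \<omega> assume "\<omega> \<in> {\<omega>\<in>space N. \<exists>u\<in>{t..s}. r \<le> \<phi> \<omega> u}"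
    then obtain u where w: "\<omega> \<in> space N" and u: "u \<in> {t..s}" "r \<le> \<phi> \<omega> u" by auto
    have "\<exists>q\<in>D. r - 1 / real (Suc n) < \<phi> \<omega> q" for n
    proof -
      have e: "1 / real (Suc n) > 0" by simp
      obtain d where d: "d > 0" and dd: "\<And>q. q \<in> {t..s} \<Longrightarrow> dist q u < d \<Longrightarrow> dist (\<phi> \<omega> q) (\<phi> \<omega> u) < 1 / real (Suc n)"
        using cont[OF w] u(1) e unfolding continuous_on_iff by metis
      obtain q where q: "q \<in> D" "dist q u < d"
      proof (cases "u = t \<or> u = s")
        case True
        then show ?thesis using that[of u] d unfolding D_def by auto
      next
        case False
        then have tu: "t < u" "u < s" using u(1) by auto
        obtain q where "q \<in> \<rat>" "max t (u - d) < q" "q < u"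
          using Rats_dense_in_real[of "max t (u - d)" u] tu d by auto
        then show ?thesis using that[of q] tu unfolding D_def by (auto simp: dist_real_def)
      qed
      have "dist (\<phi> \<omega> q) (\<phi> \<omega> u) < 1 / real (Suc n)" using dd q Ds by auto
      then have "r - 1 / real (Suc n) < \<phi> \<omega> q" using u(2) by (auto simp: dist_real_def)
      then show ?thesis using q by auto
    qed
    then show "\<omega> \<in> {\<omega>\<in>space N. \<forall>n::nat. \<exists>q\<in>D. r - 1 / real (Suc n) < \<phi> \<omega> q}" using w by auto
  next
    fix \<omega> assume "\<omega> \<in> {\<omega>\<in>space N. \<forall>n::nat. \<exists>q\<in>D. r - 1 / real (Suc n) < \<phi> \<omega> q}"
    then have w: "\<omega> \<in> space N" and H: "\<And>n. \<exists>q\<in>D. r - 1 / real (Suc n) < \<phi> \<omega> q" by auto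
    obtain u where u: "u \<in> {t..s}" and umax: "\<And>y. y \<in> {t..s} \<Longrightarrow> \<phi> \<omega> y \<le> \<phi> \<omega> u"
      using continuous_attains_sup[OF compact_Icc _ cont[OF w]] ts by auto
    have "r \<le> \<phi> \<omega> u"
    proof (rule ccontr)
      assume "\<not> r \<le> \<phi> \<omega> u"
      then have "r - \<phi> \<omega> u > 0" by simp
      then obtain n where n: "1 / real (Suc n) < r - \<phi> \<omega> u"
        using reals_Archimedean by (metis inverse_eq_divide)
      obtain q where "q \<in> D" "r - 1 / real (Suc n) < \<phi> \<omega> q" using H by blast
      then show False using umax[of q] Ds n by auto
    qed
    then show "\<omega> \<in> {\<omega>\<in>space N. \<exists>u\<in>{t..s}. r \<le> \<phi> \<omega> u}" using w u by auto
  qed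
  have P: "{\<omega>\<in>space N. r - 1 / real (Suc n) < \<phi> \<omega> q} \<in> sets N" if "q \<in> D" for n q
  proof -
    have "(\<lambda>\<omega>. \<phi> \<omega> q) \<in> borel_measurable N" using meas Ds that by auto
    then have "Measurable.pred N (\<lambda>\<omega>. r - 1 / real (Suc n) < \<phi> \<omega> q)" by measurable
    then show ?thesis by (simp add: Measurable.pred_def)
  qed
  have U: "(\<Union>q\<in>D. {\<omega>\<in>space N. r - 1 / real (Suc n) < \<phi> \<omega> q}) \<in> sets N" for n
    by (rule sets.countable_UN'[OF Dc]) (use P in auto)
  have I: "(\<Inter>n. \<Union>q\<in>D. {\<omega>\<in>space N. r - 1 / real (Suc n) < \<phi> \<omega> q}) \<in> sets N"
    by (rule sets.countable_INT) (use U in auto)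
  have "{\<omega>\<in>space N. \<forall>n::nat. \<exists>q\<in>D. r - 1 / real (Suc n) < \<phi> \<omega> q} =
        (\<Inter>n. \<Union>q\<in>D. {\<omega>\<in>space N. r - 1 / real (Suc n) < \<phi> \<omega> q})" by auto
  then show ?thesis unfolding eq using I by simp
qed



lemma integral_simple_ind:
  assumes "prob_space M" "E \<in> sets M"
  shows "integral\<^sup>L M (\<lambda>\<omega>. a + (1 - a) * indicator E \<omega>) = a + (1 - a) * measure M E"
proof -
  interpret prob_space M by fact
  have i1: "integrable M (\<lambda>\<omega>. (a::real))" by simp
  have i2: "integrable M (\<lambda>\<omega>. (1 - a) * indicator E \<omega>)"
    using assms(2) by (intro integrable_mult_right integrable_real_indicator) (auto simp: less_top[symmetric])
  show ?thesis using assms(2)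
    by (simp add: Bochner_Integration.integral_add[OF i1 i2] prob_space)
qed

lemma psi_val:
  assumes "s \<in> {0..T}" "y \<in> closure Om"
  shows "psiA T Om g0 r A e (s, y) = (if norm (y - g0 s) < r then 1 else exp (- A / e\<^sup>2))"
  using assms by (auto simp: psiA_def tube_compl_def tube_def indicator_def)



lemma partC:
  fixes M :: "'a measure" and F :: "real \<Rightarrow> 'a measure" and Y :: "'a \<Rightarrow> real \<Rightarrow> real^'n"
    and g0 :: "real \<Rightarrow> real^'n" and Om :: "(real^'n) set"
  assumes M: "prob_space M"
    and F: "filtration (space M) F" "\<forall>s. sets (F s) \<subseteq> sets M"
    and Ymeas: "\<forall>s\<in>{t..T}. (\<lambda>\<omega>. Y \<omega> s) \<in> borel_measurable (F s)"
    and Ypath: "\<forall>\<omega>\<in>space M. continuous_on {t..T} (Y \<omega>) \<and> Y \<omega> t = x \<and> (\<forall>s\<in>{t..T}. Y \<omega> s \<in> closure Om)"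
    and g0: "continuous_on {0..T} g0"
    and A: "A > 0"
    and tx: "t \<in> {0..T}"
  shows "(INF \<theta>\<in>stopping_times_in M F t T.
               integral\<^sup>L M (\<lambda>\<omega>. psiA T Om g0 r A e (\<theta> \<omega>, Y \<omega> (\<theta> \<omega>))))
         = exp (- A / e\<^sup>2) + (1 - exp (- A / e\<^sup>2)) *
             measure M {\<omega>\<in>space M. (SUP s\<in>{t..T}. norm (Y \<omega> s - g0 s)) < r}"
proof -
  interpret prob_space M by fact
  define a where "a = exp (- A / e\<^sup>2)"
  define E where "E = {\<omega>\<in>space M. (SUP s\<in>{t..T}. norm (Y \<omega> s - g0 s)) < r}"
  define \<phi> where "\<phi> \<omega> s = norm (Y \<omega> s - g0 s)" for \<omega> s
  have a0: "0 < a" unfolding a_def by simp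
  have a1: "a \<le> 1" unfolding a_def using A by simp
  have tT: "t \<le> T" "0 \<le> t" using tx by auto
  have spF: "space (F s) = space M" for s using F(1) by (simp add: filtration.space_F)
  have monoF: "sets (F s) \<subseteq> sets (F s')" if "s \<le> s'" for s s'
    using F(1) that by (simp add: filtration.sets_F_mono)
  have YmeasM: "(\<lambda>\<omega>. Y \<omega> s) \<in> borel_measurable M" if "s \<in> {t..T}" for s
    using meas_sub[OF Ymeas[rule_format, OF that] F(2)[rule_format] spF] .
  have Ycont: "continuous_on {t..T} (Y \<omega>)" if "\<omega> \<in> space M" for \<omega> using Ypath that by auto
  have Ycl: "Y \<omega> s \<in> closure Om" if "\<omega> \<in> space M" "s \<in> {t..T}" for \<omega> s using Ypath that by auto
  have g0c: "continuous_on {t..T} g0" using continuous_on_subset[OF g0] tT by auto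
  have phic: "continuous_on {t..T} (\<phi> \<omega>)" if "\<omega> \<in> space M" for \<omega>
    unfolding \<phi>_def by (intro continuous_intros Ycont[OF that] g0c)
  have phimeas: "(\<lambda>\<omega>. \<phi> \<omega> q) \<in> borel_measurable (F s)" if "q \<in> {t..s}" "s \<le> T" for q s
  proof -
    have "(\<lambda>\<omega>. Y \<omega> q) \<in> borel_measurable (F q)" using Ymeas that by auto
    then have "(\<lambda>\<omega>. Y \<omega> q) \<in> borel_measurable (F s)"
      using meas_sub monoF spF that by (metis atLeastAtMost_iff)
    then show ?thesis unfolding \<phi>_def by measurable
  qed
  have psiv: "psiA T Om g0 r A e (s, Y \<omega> s) = (if \<phi> \<omega> s < r then 1 else a)"
    if "\<omega> \<in> space M" "s \<in> {t..T}" for \<omega> s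
    unfolding \<phi>_def a_def by (rule psi_val) (use that Ycl tT in auto)
  have bdd: "bdd_above (\<phi> \<omega> ` {t..T})" if "\<omega> \<in> space M" for \<omega>
    using compact_imp_bounded[OF compact_continuous_image[OF phic[OF that] compact_Icc]]
    by (rule bounded_imp_bdd_above)
  have Echar: "\<omega> \<in> E \<longleftrightarrow> (\<forall>s\<in>{t..T}. \<phi> \<omega> s < r)" if w: "\<omega> \<in> space M" for \<omega>
  proof
    assume "\<omega> \<in> E"
    then have "(SUP s\<in>{t..T}. \<phi> \<omega> s) < r" unfolding E_def \<phi>_def by auto
    then show "\<forall>s\<in>{t..T}. \<phi> \<omega> s < r" using cSUP_upper[OF _ bdd[OF w]] by fastforce
  next
    assume H: "\<forall>s\<in>{t..T}. \<phi> \<omega> s < r"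
    obtain u where u: "u \<in> {t..T}" and umax: "\<And>y. y \<in> {t..T} \<Longrightarrow> \<phi> \<omega> y \<le> \<phi> \<omega> u"
      using continuous_attains_sup[OF compact_Icc _ phic[OF w]] tT by auto
    have "(SUP s\<in>{t..T}. \<phi> \<omega> s) = \<phi> \<omega> u"
      by (rule cSup_eq_maximum) (use u umax in auto)
    then show "\<omega> \<in> E" using H u w unfolding E_def \<phi>_def by auto
  qed
  have hitF: "{\<omega>\<in>space M. \<exists>u\<in>{t..s}. r \<le> \<phi> \<omega> u} \<in> sets (F s)" if "t \<le> s" "s \<le> T" for s
  proof -
    have "{\<omega>\<in>space (F s). \<exists>u\<in>{t..s}. r \<le> \<phi> \<omega> u} \<in> sets (F s)"
    proof (rule exists_hit_meas)
      show "(\<lambda>\<omega>. \<phi> \<omega> q) \<in> borel_measurable (F s)" if "q \<in> {t..s}" for q using phimeas that \<open>s \<le> T\<close> by auto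
      show "continuous_on {t..s} (\<phi> \<omega>)" if "\<omega> \<in> space (F s)" for \<omega>
        using continuous_on_subset[OF phic] that spF \<open>s \<le> T\<close> by auto
    qed fact
    then show ?thesis using spF by simp
  qed
  have Ecompl: "space M - E = {\<omega>\<in>space M. \<exists>u\<in>{t..T}. r \<le> \<phi> \<omega> u}"
  proof (rule set_eqI)
    fix \<omega>
    have Esub: "E \<subseteq> space M" unfolding E_def by auto
    show "\<omega> \<in> space M - E \<longleftrightarrow> \<omega> \<in> {\<omega>\<in>space M. \<exists>u\<in>{t..T}. r \<le> \<phi> \<omega> u}"
    proof (cases "\<omega> \<in> space M")
      case True
      show ?thesis using Echar[OF True] True by (auto simp: not_less)
    qed (use Esub in auto)
  qed
  have Emeas: "E \<in> sets M"
  proof -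
    have "space M - E \<in> sets M" using hitF[of T] tT F(2) Ecompl by auto
    then have "space M - (space M - E) \<in> sets M" by auto
    moreover have "space M - (space M - E) = E" unfolding E_def by auto
    ultimately show ?thesis by simp
  qed
  define z where "z = a + (1 - a) * measure M E"
  have lower: "z \<le> integral\<^sup>L M (\<lambda>\<omega>. psiA T Om g0 r A e (\<theta> \<omega>, Y \<omega> (\<theta> \<omega>)))"
    if th: "\<theta> \<in> stopping_times_in M F t T" for \<theta>
  proof -
    have st: "stopping_time F \<theta>" and thr: "\<And>\<omega>. \<omega> \<in> space M \<Longrightarrow> \<theta> \<omega> \<in> {t..T}"
      using th unfolding stopping_times_in_def by auto
    have thmeas: "\<theta> \<in> borel_measurable M"
      by (rule measurable_stopping_time[OF st]) (use F(2) spF in auto)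
    have Yth: "(\<lambda>\<omega>. Y \<omega> (\<theta> \<omega>)) \<in> borel_measurable M"
      by (rule meas_stop_eval[OF YmeasM Ycont thmeas thr])
    define g1 where "g1 s = g0 (max 0 (min T s))" for s
    have g1c: "continuous_on UNIV g1" unfolding g1_def
      by (rule continuous_on_compose2[OF g0]) (use tT in \<open>auto intro!: continuous_intros\<close>)
    have g1m: "(\<lambda>\<omega>. g1 (\<theta> \<omega>)) \<in> borel_measurable M"
      using borel_measurable_continuous_onI[OF g1c] thmeas by measurable
    define f where "f \<omega> = (if norm (Y \<omega> (\<theta> \<omega>) - g1 (\<theta> \<omega>)) < r then 1 else a)" for \<omega>
    have feq: "psiA T Om g0 r A e (\<theta> \<omega>, Y \<omega> (\<theta> \<omega>)) = f \<omega>" if w: "\<omega> \<in> space M" for \<omega>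
    proof -
      have "g1 (\<theta> \<omega>) = g0 (\<theta> \<omega>)" unfolding g1_def using thr[OF w] tT by auto
      then show ?thesis using psiv[OF w thr[OF w]] unfolding f_def \<phi>_def by simp
    qed
    have fm: "f \<in> borel_measurable M" unfolding f_def using Yth g1m by measurable
    have fi: "integrable M f"
      by (rule integrable_const_bound[where B=1]) (use fm a0 a1 in \<open>auto simp: f_def\<close>)
    have gi: "integrable M (\<lambda>\<omega>. a + (1 - a) * indicator E \<omega>)"
      using Emeas by (intro Bochner_Integration.integrable_add integrable_mult_right integrable_real_indicator)
        (auto simp: less_top[symmetric])
    have "z = integral\<^sup>L M (\<lambda>\<omega>. a + (1 - a) * indicator E \<omega>)"
      unfolding z_def by (rule integral_simple_ind[OF M Emeas, symmetric])
    also have "\<dots> \<le> integral\<^sup>L M f"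
    proof (rule integral_mono[OF gi fi])
      fix \<omega> assume w: "\<omega> \<in> space M"
      show "a + (1 - a) * indicator E \<omega> \<le> f \<omega>"
      proof (cases "\<omega> \<in> E")
        case True
        then have "\<phi> \<omega> (\<theta> \<omega>) < r" using Echar[OF w] thr[OF w] by auto
        then have "f \<omega> = 1" using feq[OF w] psiv[OF w thr[OF w]] by simp
        then show ?thesis using True by simp
      next
        case False
        then show ?thesis using a1 by (simp add: f_def)
      qed
    qed
    also have "\<dots> = integral\<^sup>L M (\<lambda>\<omega>. psiA T Om g0 r A e (\<theta> \<omega>, Y \<omega> (\<theta> \<omega>)))"
      by (rule Bochner_Integration.integral_cong) (simp_all add: feq)
    finally show ?thesis .
  qed
  define G where "G \<omega> = {s\<in>{t..T}. r \<le> \<phi> \<omega> s}" for \<omega>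
  define \<tau> where "\<tau> \<omega> = (if G \<omega> = {} then T else Inf (G \<omega>))" for \<omega>
  have Gin: "\<tau> \<omega> \<in> G \<omega>" if w: "\<omega> \<in> space M" and ne: "G \<omega> \<noteq> {}" for \<omega>
  proof -
    have "closed (G \<omega>)"
    proof -
      have "closed ({t..T} \<inter> \<phi> \<omega> -` {r..})"
        by (rule continuous_closed_preimage[OF phic[OF w]]) auto
      moreover have "{t..T} \<inter> \<phi> \<omega> -` {r..} = G \<omega>" unfolding G_def by auto
      ultimately show ?thesis by simp
    qed
    moreover have "bdd_below (G \<omega>)" unfolding G_def by (auto intro: bdd_belowI[where m=t])
    ultimately show ?thesis using closed_contains_Inf ne unfolding \<tau>_def by auto
  qed
  have taur: "\<tau> \<omega> \<in> {t..T}" if w: "\<omega> \<in> space M" for \<omega>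
  proof (cases "G \<omega> = {}")
    case True
    then show ?thesis using tT unfolding \<tau>_def by simp
  next
    case False
    then have "\<tau> \<omega> \<in> G \<omega>" by (rule Gin[OF w])
    then show ?thesis unfolding G_def by simp
  qed
  have tau_le: "\<tau> \<omega> \<le> s \<longleftrightarrow> (\<exists>u\<in>{t..s}. r \<le> \<phi> \<omega> u)"
    if w: "\<omega> \<in> space M" and s: "t \<le> s" "s < T" for \<omega> s
  proof
    assume le: "\<tau> \<omega> \<le> s"
    have "G \<omega> \<noteq> {}" using le s unfolding \<tau>_def by auto
    then show "\<exists>u\<in>{t..s}. r \<le> \<phi> \<omega> u" using Gin[OF w] le unfolding G_def by auto
  next
    assume "\<exists>u\<in>{t..s}. r \<le> \<phi> \<omega> u"
    then obtain u where u: "u \<in> {t..s}" "r \<le> \<phi> \<omega> u" by auto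
    then have uG: "u \<in> G \<omega>" unfolding G_def using s by auto
    have "bdd_below (G \<omega>)" unfolding G_def by (auto intro: bdd_belowI[where m=t])
    then have "Inf (G \<omega>) \<le> u" using uG by (rule cInf_lower[rotated])
    then show "\<tau> \<omega> \<le> s" unfolding \<tau>_def using uG u by auto
  qed
  have st: "stopping_time F \<tau>"
  proof (rule stopping_timeI)
    fix s
    show "Measurable.pred (F s) (\<lambda>\<omega>. \<tau> \<omega> \<le> s)"
    proof (cases "s < t")
      case True
      then have e: "{\<omega>\<in>space (F s). \<tau> \<omega> \<le> s} = {}" using taur spF by fastforce
      show ?thesis unfolding Measurable.pred_def e by simp
    next
      case st: False
      show ?thesis
      proof (cases "T \<le> s")
        case True
        then have e: "{\<omega>\<in>space (F s). \<tau> \<omega> \<le> s} = space (F s)" using taur spF by fastforce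
        show ?thesis unfolding Measurable.pred_def e by simp
      next
        case False
        then have e: "{\<omega>\<in>space (F s). \<tau> \<omega> \<le> s} = {\<omega>\<in>space M. \<exists>u\<in>{t..s}. r \<le> \<phi> \<omega> u}"
          using tau_le st spF by (auto simp: not_less) force+
        show ?thesis unfolding Measurable.pred_def e using hitF[of s] st False by simp
      qed
    qed
  qed
  have tauS: "\<tau> \<in> stopping_times_in M F t T"
    unfolding stopping_times_in_def using st taur by auto
  have tauval: "integral\<^sup>L M (\<lambda>\<omega>. psiA T Om g0 r A e (\<tau> \<omega>, Y \<omega> (\<tau> \<omega>))) = z"
  proof -
    have "integral\<^sup>L M (\<lambda>\<omega>. psiA T Om g0 r A e (\<tau> \<omega>, Y \<omega> (\<tau> \<omega>))) =
          integral\<^sup>L M (\<lambda>\<omega>. a + (1 - a) * indicator E \<omega>)"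
    proof (rule Bochner_Integration.integral_cong)
      fix \<omega> assume w: "\<omega> \<in> space M"
      show "psiA T Om g0 r A e (\<tau> \<omega>, Y \<omega> (\<tau> \<omega>)) = a + (1 - a) * indicator E \<omega>"
      proof (cases "\<omega> \<in> E")
        case True
        then have "G \<omega> = {}" using Echar[OF w] unfolding G_def by force
        then have "\<tau> \<omega> = T" unfolding \<tau>_def by simp
        moreover have "\<phi> \<omega> T < r" using Echar[OF w] True tT by auto
        ultimately show ?thesis using psiv[OF w taur[OF w]] True by simp
      next
        case False
        then have "G \<omega> \<noteq> {}" using Echar[OF w] unfolding G_def by (auto simp: not_less)
        then have "\<not> \<phi> \<omega> (\<tau> \<omega>) < r" using Gin[OF w] unfolding G_def by auto
        then show ?thesis using psiv[OF w taur[OF w]] False by simp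
      qed
    qed simp
    also have "\<dots> = z" unfolding z_def by (rule integral_simple_ind[OF M Emeas])
    finally show ?thesis .
  qed
  have "(INF \<theta>\<in>stopping_times_in M F t T.
               integral\<^sup>L M (\<lambda>\<omega>. psiA T Om g0 r A e (\<theta> \<omega>, Y \<omega> (\<theta> \<omega>)))) = z"
    by (rule cInf_eq_minimum) (use tauS tauval lower in \<open>force+\<close>)
  then show ?thesis unfolding z_def a_def E_def .
qed



lemma partA:
  fixes e A u :: real
  assumes e: "e > 0" and A: "A > 0" and u: "0 \<le> u" "u \<le> 1"
  defines "a \<equiv> exp (- A / e\<^sup>2)"
  shows "neg_log_scaled e (a + (1 - a) * u) \<le> min (ereal A) (neg_log_scaled e u)"
    and "min (ereal A) (neg_log_scaled e u) \<le> neg_log_scaled e (a + (1 - a) * u) + ereal (e\<^sup>2 * ln 2)"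
proof -
  have e2: "e\<^sup>2 > 0" using e by simp
  have a0: "0 < a" unfolding a_def by simp
  have a1: "a < 1" unfolding a_def using A e2 by simp
  have lna: "ln a = - A / e\<^sup>2" unfolding a_def by simp
  define U where "U = a + (1 - a) * u"
  have Ua: "a \<le> U" unfolding U_def using a1 u by simp
  have au: "a * u \<le> a * 1" using a0 u by (intro mult_left_mono) auto
  have Uu: "u \<le> U" unfolding U_def using au by (simp add: algebra_simps)
  have U2: "U \<le> a + u" unfolding U_def using a0 u by (simp add: algebra_simps)
  have U0: "U > 0" using Ua a0 by linarith
  have nU: "neg_log_scaled e U = ereal (- e\<^sup>2 * ln U)" using U0 by (simp add: neg_log_scaled_def)
  have "- e\<^sup>2 * ln U \<le> - e\<^sup>2 * ln a" using ln_le_cancel_iff Ua a0 U0 e2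
    by (simp add: mult_le_cancel_left)
  also have "\<dots> = A" using lna e2 by simp
  finally have i1: "- e\<^sup>2 * ln U \<le> A" .
  have i2: "ereal (- e\<^sup>2 * ln U) \<le> neg_log_scaled e u"
  proof (cases "u = 0")
    case True then show ?thesis by (simp add: neg_log_scaled_def)
  next
    case False
    then have "u > 0" using u by simp
    then have "ln u \<le> ln U" using Uu by simp
    then show ?thesis using False e2 by (simp add: neg_log_scaled_def mult_le_cancel_left)
  qed
  show "neg_log_scaled e (a + (1 - a) * u) \<le> min (ereal A) (neg_log_scaled e u)"
    using nU i1 i2 unfolding U_def[symmetric] by simp
  show "min (ereal A) (neg_log_scaled e u) \<le> neg_log_scaled e (a + (1 - a) * u) + ereal (e\<^sup>2 * ln 2)"
  proof (cases "u \<le> a")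
    case True
    then have "U \<le> 2 * a" using U2 by simp
    then have "ln U \<le> ln (2 * a)" using U0 a0 by simp
    also have "\<dots> = ln 2 + ln a" using a0 by (simp add: ln_mult)
    finally have "ln U \<le> ln 2 + ln a" .
    then have "e\<^sup>2 * ln U \<le> e\<^sup>2 * (ln 2 + ln a)" using e2 by (intro mult_left_mono) auto
    also have "\<dots> = e\<^sup>2 * ln 2 - A" using lna e2 by (simp add: field_simps)
    finally have "A \<le> - e\<^sup>2 * ln U + e\<^sup>2 * ln 2" by linarith
    then show ?thesis using nU unfolding U_def[symmetric] by (simp add: min_le_iff_disj)
  next
    case False
    then have u0: "u > 0" using a0 by simp
    have "U \<le> 2 * u" using U2 False by simp
    then have "ln U \<le> ln (2 * u)" using U0 u0 by simp
    also have "\<dots> = ln 2 + ln u" using u0 by (simp add: ln_mult)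
    finally have "ln U \<le> ln 2 + ln u" .
    then have "e\<^sup>2 * ln U \<le> e\<^sup>2 * (ln 2 + ln u)" using e2 by (intro mult_left_mono) auto
    then have "- e\<^sup>2 * ln u \<le> - e\<^sup>2 * ln U + e\<^sup>2 * ln 2" by (simp add: algebra_simps)
    then show ?thesis using nU u0 unfolding U_def[symmetric] by (simp add: min_le_iff_disj neg_log_scaled_def)
  qed
qed



lemma partB:
  fixes V w :: "real \<Rightarrow> ereal" and A :: real
  assumes up: "eventually (\<lambda>e. V e \<le> min (ereal A) (w e)) (at_right 0)"
    and lo: "eventually (\<lambda>e. min (ereal A) (w e) \<le> V e + ereal (e\<^sup>2 * ln 2)) (at_right 0)"
  shows "Limsup (at_right 0) V = min (ereal A) (Limsup (at_right 0) w)"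
proof -
  have nb: "at_right (0::real) \<noteq> bot" by simp
  have cm: "Limsup (at_right 0) (\<lambda>e. min (ereal A) (w e)) = min (ereal A) (Limsup (at_right 0) w)"
    by (rule Limsup_compose_continuous_mono[OF _ _ nb])
       (auto intro!: continuous_on_min continuous_on_const continuous_on_id simp: mono_def min_le_iff_disj)
  have "Limsup (at_right 0) V \<le> Limsup (at_right 0) (\<lambda>e. min (ereal A) (w e))"
    by (rule Limsup_mono[OF up])
  moreover have "Limsup (at_right 0) (\<lambda>e. min (ereal A) (w e)) \<le> Limsup (at_right 0) V"
  proof (rule ereal_le_epsilon2)
    fix d :: real assume d: "0 < d"
    have "((\<lambda>e::real. e\<^sup>2 * ln 2) \<longlongrightarrow> 0 ^ 2 * ln 2) (at_right 0)"
      by (intro tendsto_intros)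
    then have "((\<lambda>e::real. e\<^sup>2 * ln 2) \<longlongrightarrow> 0) (at_right 0)" by simp
    then have "eventually (\<lambda>e. e\<^sup>2 * ln 2 < d) (at_right 0)"
      using d by (rule order_tendstoD)
    then have "eventually (\<lambda>e. min (ereal A) (w e) \<le> V e + ereal d) (at_right 0)"
      using lo
    proof eventually_elim
      case (elim e)
      then show ?case by (meson add_left_mono ereal_less_eq(3) less_imp_le order_trans)
    qed
    then have "Limsup (at_right 0) (\<lambda>e. min (ereal A) (w e)) \<le> Limsup (at_right 0) (\<lambda>e. V e + ereal d)"
      by (rule Limsup_mono)
    also have "\<dots> = Limsup (at_right 0) V + ereal d"
      by (rule Limsup_add_ereal_right[OF nb]) simp
    finally show "Limsup (at_right 0) (\<lambda>e. min (ereal A) (w e)) \<le> Limsup (at_right 0) V + ereal d" .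
  qed
  ultimately show ?thesis using cm by (metis antisym)
qed

theorem mainTheorem4:
  fixes M :: "'a measure" and F :: "real \<Rightarrow> 'a measure" and W :: "'a \<Rightarrow> real \<Rightarrow> real^'m"
    and Om :: "(real^'n) set" and \<gamma> :: "real^'n \<Rightarrow> real^'n"
    and b :: "real \<Rightarrow> real \<Rightarrow> real^'n \<Rightarrow> real^'n"
    and \<sigma> :: "real \<Rightarrow> real \<Rightarrow> real^'n \<Rightarrow> real^'m^'n"
    and X :: "real \<Rightarrow> real \<Rightarrow> real^'n \<Rightarrow> 'a \<Rightarrow> real \<Rightarrow> real^'n"
    and g0 :: "real \<Rightarrow> real^'n"
    and T r A t :: real and x :: "real^'n"
  assumes M: "prob_space M"
    and F: "filtration (space M) F" "\<forall>s. sets (F s) \<subseteq> sets M"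
    and BM: "brownian_motion M F W"
    and dom: "W2inf_domain Om"
    and gamma_lip: "\<exists>L. L-lipschitz_on UNIV \<gamma>"
    and gamma_n: "\<exists>c0>0. \<forall>y \<nu>. unit_outward_normal Om y \<nu> \<longrightarrow> \<gamma> y \<bullet> \<nu> \<ge> c0"
    and b_reg: "\<forall>\<epsilon>>0. continuous_on ({0..T} \<times> UNIV) (\<lambda>(s, y). b \<epsilon> s y) \<and>
                  (\<exists>L. \<forall>s\<in>{0..T}. L-lipschitz_on UNIV (b \<epsilon> s))"
    and sigma_reg: "\<forall>\<epsilon>>0. continuous_on ({0..T} \<times> UNIV) (\<lambda>(s, y). \<sigma> \<epsilon> s y) \<and>
                  (\<exists>L. \<forall>s\<in>{0..T}. L-lipschitz_on UNIV (\<sigma> \<epsilon> s))"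
    and X_sol: "\<forall>\<epsilon>>0. \<forall>t'\<in>{0..T}. \<forall>x'\<in>closure Om.
                  reflected_sde_solution M F W Om \<gamma> (b \<epsilon>) (\<sigma> \<epsilon>) \<epsilon> t' T x' (X \<epsilon> t' x')"
    and g0: "continuous_on {0..T} g0" "\<forall>s\<in>{0..T}. g0 s \<in> closure Om"
    and r: "r > 0"
    and A: "A > 0"
    and tx: "t \<in> {0..T}" "x \<in> closure Om"
  shows "Limsup (at_right 0) (\<lambda>\<epsilon>. neg_log_scaled \<epsilon>
            (INF \<theta>\<in>stopping_times_in M F t T.
               integral\<^sup>L M (\<lambda>\<omega>. psiA T Om g0 r A \<epsilon> (\<theta> \<omega>, X \<epsilon> t x \<omega> (\<theta> \<omega>)))))
       = min (ereal A) (Limsup (at_right 0) (\<lambda>\<epsilon>. neg_log_scaled \<epsilon>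
            (measure M {\<omega>\<in>space M. (SUP s\<in>{t..T}. norm (X \<epsilon> t x \<omega> s - g0 s)) < r})))"
proof -
  have key: "(INF \<theta>\<in>stopping_times_in M F t T.
               integral\<^sup>L M (\<lambda>\<omega>. psiA T Om g0 r A e (\<theta> \<omega>, X e t x \<omega> (\<theta> \<omega>))))
         = exp (- A / e\<^sup>2) + (1 - exp (- A / e\<^sup>2)) *
             measure M {\<omega>\<in>space M. (SUP s\<in>{t..T}. norm (X e t x \<omega> s - g0 s)) < r}" if e: "e > 0" for e
  proof -
    have sol: "reflected_sde_solution M F W Om \<gamma> (b e) (\<sigma> e) e t T x (X e t x)"
      using X_sol e tx by auto
    have Ymeas: "\<forall>s\<in>{t..T}. (\<lambda>\<omega>. X e t x \<omega> s) \<in> borel_measurable (F s)"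
      and Ypath: "\<forall>\<omega>\<in>space M. continuous_on {t..T} (X e t x \<omega>) \<and> X e t x \<omega> t = x \<and> (\<forall>s\<in>{t..T}. X e t x \<omega> s \<in> closure Om)"
      using sol unfolding reflected_sde_solution_def by blast+
    show ?thesis by (rule partC[OF M F(1) F(2) Ymeas Ypath g0(1) A tx(1)])
  qed
  have pos: "eventually (\<lambda>e. e > 0) (at_right (0::real))" by (rule eventually_at_right_less)
  define u where "u e = measure M {\<omega>\<in>space M. (SUP s\<in>{t..T}. norm (X e t x \<omega> s - g0 s)) < r}" for e
  have u01: "0 \<le> u e" "u e \<le> 1" for e
    unfolding u_def using prob_space.prob_le_1[OF M] by auto
  define V where "V e = neg_log_scaled e (INF \<theta>\<in>stopping_times_in M F t T.
               integral\<^sup>L M (\<lambda>\<omega>. psiA T Om g0 r A e (\<theta> \<omega>, X e t x \<omega> (\<theta> \<omega>))))" for e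
  have ev1: "eventually (\<lambda>e. V e \<le> min (ereal A) (neg_log_scaled e (u e))) (at_right 0)"
    using pos
  proof eventually_elim
    case (elim e)
    show ?case unfolding V_def key[OF elim] u_def[symmetric] by (rule partA(1)[OF elim A u01])
  qed
  have ev2: "eventually (\<lambda>e. min (ereal A) (neg_log_scaled e (u e)) \<le> V e + ereal (e\<^sup>2 * ln 2)) (at_right 0)"
    using pos
  proof eventually_elim
    case (elim e)
    show ?case unfolding V_def key[OF elim] u_def[symmetric] by (rule partA(2)[OF elim A u01])
  qed
  have "Limsup (at_right 0) V = min (ereal A) (Limsup (at_right 0) (\<lambda>e. neg_log_scaled e (u e)))"
    by (rule partB[OF ev1 ev2])
  then show ?thesis unfolding V_def u_def .
qed

end
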